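(* Let $p\ge1$ and let $d^{p}_{\mathrm{ERP}}$ be the ERP distance on finite sequences of vectors in $\mathbb{R}^d$. Then: (a) if $\bm A,\bm B$ are sequences of one-hot vectors (rows in $\{0,1\}^d$ with exactly one entry $1$) and $p=\infty$, then $d^{\infty}_{\mathrm{ERP}}(\bm A,\bm B)$ equals the Levenshtein (edit) distance between $\bm A$ and $\bm B$; (b) for all $\bm A\in\mathbb{R}^{m\times d}$, $\bm B\in\mathbb{R}^{n\times d}$: $d^p_{\mathrm{ERP}}(\bm A\oplus\bm0,\bm B)=d^p_{\mathrm{ERP}}(\bm0\oplus\bm A,\bm B)=d^p_{\mathrm{ERP}}(\bm A,\bm B)$, where $\bm0$ is a single zero row; (c) $d^p_{\mathrm{ERP}}(\bm A,\emptyset)=\sum_{i=1}^m\|\bm a_i\|_p$ for all $\bm A\in\mathbb{R}^{m\times d}$; (d) $d^p_{\mathrm{ERP}}(\bm A,\bm B)=d^p_{\mathrm{ERP}}(\bm B,\bm A)$ for all $\bm A,\bm B$; (e) for all $\bm A\in\mathbb{R}^{m\times d}$, $\bm B\in\mathbb{R}^{n\times d}$, $\bm C\in\mathbb{R}^{l\times d}$: $d^p_{\mathrm{ERP}}(\bm A,\bm B)\le d^p_{\mathrm{ERP}}(\bm A,\bm C)+d^p_{\mathrm{ERP}}(\bm C,\bm B)$; (f) $d^p_{\mathrm{ERP}}(\bm A,\bm A\oplus\bm0)=d^p_{\mathrm{ERP}}(\bm A,\bm A)=0$ for all $\bm A\in\mathbb{R}^{m\times d}$ (so $d^p_{\mathrm{ERP}}$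 is not a distance).
   Context: For $\bm A\in\mathbb{R}^{m\times d}$, $\bm B\in\mathbb{R}^{n\times d}$ (rows $\bm a_i,\bm b_i$), $\bm A\oplus\bm B$ is vertical concatenation, $\emptyset$ is the empty sequence, and $\bm A_{2:}$ removes the first row. The ERP distance is defined recursively: $d^p_{\mathrm{ERP}}(\bm A,\emptyset)=\sum_{i=1}^m\|\bm a_i\|_p$, $d^p_{\mathrm{ERP}}(\emptyset,\bm B)=\sum_{i=1}^n\|\bm b_i\|_p$, and otherwise $d^p_{\mathrm{ERP}}(\bm A,\bm B)=\min\{\|\bm a_1\|_p+d^p_{\mathrm{ERP}}(\bm A_{2:},\bm B),\ \|\bm b_1\|_p+d^p_{\mathrm{ERP}}(\bm A,\bm B_{2:}),\ \|\bm a_1-\bm b_1\|_p+d^p_{\mathrm{ERP}}(\bm A_{2:},\bm B_{2:})\}$. The Levenshtein distance is the minimum number of single-element insertions, deletions and substitutions transforming one sequence into the other. *)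

theory Defs
  imports "HOL-Analysis.Analysis" "HOL-Library.Extended_Real"
begin

text \<open>Vectors in R^d are elements of real ^ 'd; a sequence (m x d matrix) is a list of rows.
  The exponent p ranges over extended reals so that p = infinity is allowed.\<close>

fun pnorm :: "ereal \<Rightarrow> real ^ 'd \<Rightarrow> real" where
  "pnorm (ereal r) x = (\<Sum>i\<in>UNIV. \<bar>x $ i\<bar> powr r) powr (1 / r)"
| "pnorm PInfty x = Max (range (\<lambda>i. \<bar>x $ i\<bar>))"
| "pnorm MInfty x = 0"

fun erp :: "ereal \<Rightarrow> (real ^ 'd) list \<Rightarrow> (real ^ 'd) list \<Rightarrow> real" where
  "erp p A [] = (\<Sum>a\<leftarrow>A. pnorm p a)"
| "erp p [] B = (\<Sum>b\<leftarrow>B. pnorm p b)"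
| "erp p (a # A) (b # B) =
     min (pnorm p a + erp p A (b # B))
         (min (pnorm p b + erp p (a # A) B) (pnorm p (a - b) + erp p A B))"

inductive edit_step :: "'a list \<Rightarrow> 'a list \<Rightarrow> bool" where
  del: "edit_step (xs @ x # ys) (xs @ ys)"
| ins: "edit_step (xs @ ys) (xs @ x # ys)"
| sub: "edit_step (xs @ x # ys) (xs @ y # ys)"

definition levenshtein :: "'a list \<Rightarrow> 'a list \<Rightarrow> nat" where
  "levenshtein xs ys = (LEAST n. (edit_step ^^ n) xs ys)"

definition one_hot :: "real ^ 'd \<Rightarrow> bool" where
  "one_hot x \<longleftrightarrow> (\<forall>i. x $ i = 0 \<or> x $ i = 1) \<and> card {i. x $ i = 1} = 1"

end

theory Submission
  imports Defs
begin

fun gd :: "('a \<Rightarrow> real) \<Rightarrow> ('a \<Rightarrow> 'a \<Rightarrow> real) \<Rightarrow> 'a list \<Rightarrow> 'a list \<Rightarrow> real" where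
  "gd g c A [] = (\<Sum>a\<leftarrow>A. g a)"
| "gd g c [] B = (\<Sum>b\<leftarrow>B. g b)"
| "gd g c (a # A) (b # B) =
     min (g a + gd g c A (b # B)) (min (g b + gd g c (a # A) B) (c a b + gd g c A B))"

lemma gd_Nil[simp]: "gd g c [] B = (\<Sum>b\<leftarrow>B. g b)"
  by (cases B) auto

lemma l2_induct:
  fixes P :: "'a list \<Rightarrow> 'a list \<Rightarrow> bool"
  assumes "\<And>A. P A []" "\<And>b B. P [] (b # B)"
    "\<And>a A b B. P A (b # B) \<Longrightarrow> P (a # A) B \<Longrightarrow> P A B \<Longrightarrow> P (a # A) (b # B)"
  shows "P A B"
  by (rule gd.induct[of "\<lambda>_ _ A B. P A B"]) (auto intro: assms)

locale cost =
  fixes g :: "'a \<Rightarrow> real" and c :: "'a \<Rightarrow> 'a \<Rightarrow> real"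
  assumes g_nn: "g x \<ge> 0"
    and c_refl: "c x x = 0"
    and c_sym: "c x y = c y x"
    and c_tri: "c x z \<le> c x y + c y z"
    and g_tri: "g x \<le> c x y + g y"
begin

lemma c_nn: "c x y \<ge> 0"
  using c_tri[of x x y] c_refl[of x] c_sym[of y x] by linarith

lemma U1: "gd g c (a # A) B \<le> g a + gd g c A B"
  by (cases B) auto

lemma U2: "gd g c A (b # B) \<le> g b + gd g c A B"
  by (cases A) auto

lemma U3: "gd g c (a # A) (b # B) \<le> c a b + gd g c A B"
  by simp

lemma decomp:
  assumes "\<not> (X = [] \<and> Y = [])"
  shows "(\<exists>x X'. X = x # X' \<and> gd g c X Y = g x + gd g c X' Y)
       \<or> (\<exists>y Y'. Y = y # Y' \<and> gd g c X Y = g y + gd g c X Y')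
       \<or> (\<exists>x X' y Y'. X = x # X' \<and> Y = y # Y' \<and> gd g c X Y = c x y + gd g c X' Y')"
proof (cases X)
  case Nil
  then obtain y Y' where "Y = y # Y'" using assms by (cases Y) auto
  then show ?thesis using Nil by auto
next
  case (Cons x X')
  show ?thesis
  proof (cases Y)
    case Nil
    then show ?thesis using Cons by auto
  next
    case (Cons y Y')
    then show ?thesis using \<open>X = x # X'\<close>
      by (simp add: min_def split: if_splits)
  qed
qed

lemma sl_nn: "0 \<le> sum_list (map g A)"
  by (induction A) (auto simp: g_nn add_nonneg_nonneg)

lemma nn: "gd g c A B \<ge> 0"
  by (induction A B rule: l2_induct) (auto simp: sl_nn g_nn c_nn add_nonneg_nonneg)

lemma sym: "gd g c A B = gd g c B A"
proof (induction A B rule: l2_induct)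
  case (1 A)
  then show ?case by (cases A) auto
next
  case (2 b B)
  then show ?case by simp
next
  case (3 a A b B)
  then show ?case by (simp add: c_sym min.commute min.left_commute ac_simps)
qed

lemma self: "gd g c A A = 0"
proof (induction A)
  case Nil then show ?case by simp
next
  case (Cons a A)
  have "gd g c (a # A) (a # A) \<le> 0" using U3[of a A a A] Cons by (simp add: c_refl)
  then show ?case using nn[of "a # A" "a # A"] by linarith
qed

lemma tri: "gd g c A B \<le> gd g c A C + gd g c C B"
proof (induction "length A + length B + length C" arbitrary: A B C rule: less_induct)
  case less
  have IH: "\<And>A' B' C'. length A' + length B' + length C' < length A + length B + length C
     \<Longrightarrow> gd g c A' B' \<le> gd g c A' C' + gd g c C' B'" using less by blast
  consider (AC0) "A = [] \<and> C = []" | (CB0) "C = [] \<and> B = []"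
    | (go) "\<not> (A = [] \<and> C = [])" "\<not> (C = [] \<and> B = [])" by blast
  then show ?case
  proof cases
    case AC0 then show ?thesis by simp
  next
    case CB0 then show ?thesis using nn[of A C] by simp
  next
    case go
    from decomp[OF go(1)] consider
        (d1) x X' where "A = x # X'" "gd g c A C = g x + gd g c X' C"
      | (d2) y Y' where "C = y # Y'" "gd g c A C = g y + gd g c A Y'"
      | (d3) x X' y Y' where "A = x # X'" "C = y # Y'" "gd g c A C = c x y + gd g c X' Y'"
      by blast
    note dAC = this
    from decomp[OF go(2)] consider
        (e1) y Y' where "C = y # Y'" "gd g c C B = g y + gd g c Y' B"
      | (e2) z Z' where "B = z # Z'" "gd g c C B = g z + gd g c C Z'"
      | (e3) y Y' z Z' where "C = y # Y'" "B = z # Z'" "gd g c C B = c y z + gd g c Y' Z'"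
      by blast
    note dCB = this
    show ?thesis
    proof (cases rule: dAC)
      case (d1 x X')
      have "gd g c A B \<le> g x + gd g c X' B" using U1 d1 by simp
      also have "\<dots> \<le> g x + (gd g c X' C + gd g c C B)"
        using IH[of X' B C] d1 by simp
      finally show ?thesis using d1 by simp
    next
      case (d2 y Y')
      show ?thesis
      proof (cases rule: dCB)
        case (e1 y' Y'')
        then have "y' = y" "Y'' = Y'" using d2 by auto
        have "gd g c A B \<le> gd g c A Y' + gd g c Y' B" using IH[of A B Y'] d2 by simp
        then show ?thesis using d2 e1 \<open>y' = y\<close> \<open>Y'' = Y'\<close> g_nn[of y] by simp
      next
        case (e2 z Z')
        have "gd g c A B \<le> g z + gd g c A Z'" using U2 e2 by simp
        also have "\<dots> \<le> g z + (gd g c A C + gd g c C Z')"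
          using IH[of A Z' C] e2 by simp
        finally show ?thesis using e2 by simp
      next
        case (e3 y' Y'' z Z')
        then have "y' = y" "Y'' = Y'" using d2 by auto
        have "gd g c A B \<le> g z + gd g c A Z'" using U2 e3 by simp
        also have "\<dots> \<le> g z + (gd g c A Y' + gd g c Y' Z')"
          using IH[of A Z' Y'] e3 d2 by simp
        also have "g z \<le> c z y + g y" by (rule g_tri)
        finally show ?thesis using d2 e3 \<open>y' = y\<close> \<open>Y'' = Y'\<close> c_sym[of z y] by simp
      qed
    next
      case (d3 x X' y Y')
      show ?thesis
      proof (cases rule: dCB)
        case (e1 y' Y'')
        then have "y' = y" "Y'' = Y'" using d3 by auto
        have "gd g c A B \<le> g x + gd g c X' B" using U1 d3 by simp
        also have "\<dots> \<le> g x + (gd g c X' Y' + gd g c Y' B)"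
          using IH[of X' B Y'] d3 by simp
        also have "g x \<le> c x y + g y" by (rule g_tri)
        finally show ?thesis using d3 e1 \<open>y' = y\<close> \<open>Y'' = Y'\<close> by simp
      next
        case (e2 z Z')
        have "gd g c A B \<le> g z + gd g c A Z'" using U2 e2 by simp
        also have "\<dots> \<le> g z + (gd g c A C + gd g c C Z')"
          using IH[of A Z' C] e2 by simp
        finally show ?thesis using e2 by simp
      next
        case (e3 y' Y'' z Z')
        then have "y' = y" "Y'' = Y'" using d3 by auto
        have "gd g c A B \<le> c x z + gd g c X' Z'" using U3 e3 d3 by simp
        also have "\<dots> \<le> c x z + (gd g c X' Y' + gd g c Y' Z')"
          using IH[of X' Z' Y'] e3 d3 by simp
        also have "c x z \<le> c x y + c y z" by (rule c_tri)
        finally show ?thesis using d3 e3 \<open>y' = y\<close> \<open>Y'' = Y'\<close> by simp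
      qed
    qed
  qed
qed

lemma snoc_zero: assumes "g z = 0" shows "gd g c (A @ [z]) A = 0"
proof -
  have "gd g c (A @ [z]) A \<le> 0"
  proof (induction A)
    case Nil then show ?case using assms by simp
  next
    case (Cons a A)
    then show ?case using U3[of a "A @ [z]" a A] by (simp add: c_refl)
  qed
  then show ?thesis using nn[of "A @ [z]" A] by linarith
qed

lemma cons_zero: assumes "g z = 0" shows "gd g c (z # A) A = 0"
  using U1[of z A A] self[of A] nn[of "z # A" A] assms by simp

end


lemma scalar_conv:
  fixes a b t r :: real
  assumes "a \<ge> 0" "b \<ge> 0" "0 \<le> t" "t \<le> 1" "r \<ge> 1"
  shows "(t * a + (1 - t) * b) powr r \<le> t * a powr r + (1 - t) * b powr r"
proof (cases "a > 0 \<and> b > 0")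
  case True
  have "((1 - t) * b + t * a) powr r \<le> (1 - t) * b powr r + t * a powr r"
    using convex_onD[OF powr_convex[OF assms(5)], of t b a] True assms by auto
  moreover have "(1 - t) * b + t * a = t * a + (1 - t) * b" by simp
  ultimately show ?thesis by simp
next
  case False
  have key: "(u * x) powr r \<le> u * x powr r" if "0 \<le> u" "u \<le> 1" "x \<ge> 0" for u x :: real
  proof -
    have "u powr r \<le> u powr 1"
      using that assms(5) powr_mono'[of 1 r u] by (cases "u = 0") auto
    then have "u powr r \<le> u" using that by simp
    then show ?thesis using that by (simp add: powr_mult mult_right_mono)
  qed
  show ?thesis
  proof (cases "a = 0")
    case True
    then show ?thesis using key[of "1 - t" b] assms by simp
  next
    case a: False
    then have "b = 0" using False assms by auto
    then show ?thesis using key[of t a] assms by simp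
  qed
qed

definition F :: "real \<Rightarrow> real ^ 'd \<Rightarrow> real" where
  "F r x = (\<Sum>i\<in>UNIV. \<bar>x $ i\<bar> powr r)"

lemma F_nn: "F r x \<ge> 0" unfolding F_def by (simp add: sum_nonneg)

lemma F_zero_imp: assumes "F r x = 0" shows "x = 0"
proof -
  have "\<forall>i\<in>UNIV. \<bar>x $ i\<bar> powr r = 0"
    using assms unfolding F_def by (subst sum_nonneg_eq_0_iff[symmetric]) auto
  then show ?thesis by (simp add: vec_eq_iff)
qed

lemma minkowski:
  fixes x y :: "real ^ 'd"
  assumes r: "r \<ge> 1"
  shows "F r (x + y) powr (1 / r) \<le> F r x powr (1 / r) + F r y powr (1 / r)"
proof -
  define s where "s = F r x powr (1 / r)"
  define t where "t = F r y powr (1 / r)"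
  show ?thesis
  proof (cases "s = 0 \<or> t = 0")
    case True
    then show ?thesis
    proof
      assume "s = 0"
      then have "x = 0" using F_zero_imp[of r x] unfolding s_def by simp
      then show ?thesis by (simp add: F_def)
    next
      assume "t = 0"
      then have "y = 0" using F_zero_imp[of r y] unfolding t_def by simp
      then show ?thesis by (simp add: F_def)
    qed
  next
    case False
    then have s0: "s > 0" and t0: "t > 0" unfolding s_def t_def by auto
    have Fs: "F r x = s powr r" unfolding s_def using r F_nn[of r x]
      by (simp add: powr_powr)
    have Ft: "F r y = t powr r" unfolding t_def using r F_nn[of r y]
      by (simp add: powr_powr)
    define l where "l = s / (s + t)"
    have l0: "0 \<le> l" "l \<le> 1" "1 - l = t / (s + t)" using s0 t0 unfolding l_def
      by (auto simp: field_simps)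
    have pt: "\<bar>(x + y) $ i\<bar> powr r \<le> (s + t) powr r *
       (l * (\<bar>x $ i\<bar> / s) powr r + (1 - l) * (\<bar>y $ i\<bar> / t) powr r)" for i
    proof -
      have e1: "l * (\<bar>x $ i\<bar> / s) = \<bar>x $ i\<bar> / (s + t)" using s0 unfolding l_def by simp
      have e2: "(1 - l) * (\<bar>y $ i\<bar> / t) = \<bar>y $ i\<bar> / (s + t)" using t0 l0(3) by simp
      have e: "\<bar>x $ i\<bar> + \<bar>y $ i\<bar> = (s + t) * (l * (\<bar>x $ i\<bar> / s) + (1 - l) * (\<bar>y $ i\<bar> / t))"
        unfolding e1 e2 using s0 t0 by (simp add: add_divide_distrib[symmetric])
      have "\<bar>(x + y) $ i\<bar> powr r \<le> (\<bar>x $ i\<bar> + \<bar>y $ i\<bar>) powr r"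
        using r by (intro powr_mono2) (auto simp: abs_triangle_ineq)
      also have "\<dots> = (s + t) powr r * (l * (\<bar>x $ i\<bar> / s) + (1 - l) * (\<bar>y $ i\<bar> / t)) powr r"
        unfolding e using s0 t0 l0 by (subst powr_mult) auto
      also have "\<dots> \<le> (s + t) powr r *
          (l * (\<bar>x $ i\<bar> / s) powr r + (1 - l) * (\<bar>y $ i\<bar> / t) powr r)"
        using scalar_conv[of "\<bar>x $ i\<bar> / s" "\<bar>y $ i\<bar> / t" l r] s0 t0 l0 r
        by (intro mult_left_mono) auto
      finally show ?thesis .
    qed
    have "F r (x + y) \<le> (\<Sum>i\<in>UNIV. (s + t) powr r *
       (l * (\<bar>x $ i\<bar> / s) powr r + (1 - l) * (\<bar>y $ i\<bar> / t) powr r))"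
      unfolding F_def by (intro sum_mono pt)
    also have "\<dots> = (s + t) powr r * (l * (F r x / s powr r) + (1 - l) * (F r y / t powr r))"
      unfolding F_def using s0 t0
      by (simp add: sum_distrib_left sum_distrib_right sum.distrib powr_divide sum_divide_distrib algebra_simps)
    also have "\<dots> = (s + t) powr r" using Fs Ft s0 t0 by simp
    finally have "F r (x + y) \<le> (s + t) powr r" .
    then have "F r (x + y) powr (1 / r) \<le> ((s + t) powr r) powr (1 / r)"
      using r F_nn by (intro powr_mono2) auto
    also have "\<dots> = s + t" using r s0 t0 by (simp add: powr_powr)
    finally show ?thesis unfolding s_def t_def .
  qed
qed

lemma pnorm_inf[simp]: "pnorm \<infinity> x = Max (range (\<lambda>i. \<bar>x $ i\<bar>))"
  using pnorm.simps(2)[of x] by simp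

lemma pnorm_minf[simp]: "pnorm (-\<infinity>) x = 0"
  using pnorm.simps(3)[of x] by simp

lemma pnorm_ereal: "pnorm (ereal r) x = F r x powr (1 / r)"
  by (simp add: F_def)

lemma fin_range: "finite (range (\<lambda>i::'d::finite. f i))" by simp

lemma pnorm_tri:
  assumes "p \<ge> 1"
  shows "pnorm p (x + y) \<le> pnorm p x + pnorm p y"
proof (cases p)
  case (real r)
  then show ?thesis using assms minkowski[of r x y] by (simp add: F_def)
next
  case PInf
  have "\<bar>(x + y) $ i\<bar> \<le> Max (range (\<lambda>i. \<bar>x $ i\<bar>)) + Max (range (\<lambda>i. \<bar>y $ i\<bar>))" for i
  proof -
    have h: "\<bar>x $ i\<bar> \<le> Max (range (\<lambda>i. \<bar>x $ i\<bar>))" "\<bar>y $ i\<bar> \<le> Max (range (\<lambda>i. \<bar>y $ i\<bar>))"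
      by (auto intro: Max_ge)
    have "\<bar>(x + y) $ i\<bar> = \<bar>x $ i + y $ i\<bar>" by simp
    then show ?thesis using h abs_triangle_ineq[of "x $ i" "y $ i"] by linarith
  qed
  then show ?thesis using PInf by (auto intro!: Max.boundedI)
next
  case MInf
  then show ?thesis using assms by simp
qed

lemma pnorm_nn: "pnorm p x \<ge> 0"
proof (cases p)
  case PInf
  have h: "\<bar>x $ undefined\<bar> \<le> Max (range (\<lambda>i. \<bar>x $ i\<bar>))" by (auto intro: Max_ge)
  have "pnorm p x = Max (range (\<lambda>i. \<bar>x $ i\<bar>))" using PInf by simp
  then show ?thesis using h abs_ge_zero[of "x $ undefined"] by linarith
qed auto

lemma pnorm_zero: "pnorm p 0 = 0"
proof (cases p)
  case PInf
  have "range (\<lambda>i::'a. \<bar>(0::real^'a) $ i\<bar>) = {0}" by auto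
  then show ?thesis using PInf by simp
qed auto

lemma pnorm_uminus: "pnorm p (- x) = pnorm p x"
  by (cases p) auto

lemma pnorm_cost: assumes "p \<ge> 1"
  shows "cost (pnorm p) (\<lambda>a b. pnorm p (a - b))"
proof
  fix x y z :: "real ^ 'd"
  show "pnorm p x \<ge> 0" by (rule pnorm_nn)
  show "pnorm p (x - x) = 0" by (simp add: pnorm_zero)
  show "pnorm p (x - y) = pnorm p (y - x)" using pnorm_uminus[of p "y - x"] by simp
  show "pnorm p (x - z) \<le> pnorm p (x - y) + pnorm p (y - z)"
    using pnorm_tri[OF assms, of "x - y" "y - z"] by simp
  show "pnorm p x \<le> pnorm p (x - y) + pnorm p y"
    using pnorm_tri[OF assms, of "x - y" y] by simp
qed

lemma erp_gd: "erp p A B = gd (pnorm p) (\<lambda>a b. pnorm p (a - b)) A B"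
  by (induction p A B rule: erp.induct) auto


lemma gd_cong:
  "(\<forall>a\<in>set A. g a = g' a) \<Longrightarrow> (\<forall>b\<in>set B. g b = g' b) \<Longrightarrow>
   (\<forall>a\<in>set A. \<forall>b\<in>set B. c a b = c' a b) \<Longrightarrow> gd g c A B = gd g' c' A B"
  by (induction A B rule: l2_induct) (auto cong: map_cong)

definition L :: "'a list \<Rightarrow> 'a list \<Rightarrow> real" where
  "L = gd (\<lambda>_. 1) (\<lambda>a b. if a = b then 0 else 1)"

interpretation lev: cost "\<lambda>_. 1::real" "\<lambda>a b. if a = b then 0 else 1"
  by unfold_locales auto

lemma oh_norm: assumes "one_hot a" shows "pnorm \<infinity> a = 1"
proof -
  from assms have "card {i. a $ i = 1} = 1" unfolding one_hot_def by blast
  then obtain i where "{i. a $ i = 1} = {i}" by (rule card_1_singletonE)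
  then have "a $ i = 1" by blast
  moreover have "\<bar>a $ j\<bar> \<le> 1" for j
  proof -
    have "a $ j = 0 \<or> a $ j = 1" using assms unfolding one_hot_def by blast
    then show ?thesis by auto
  qed
  ultimately show ?thesis unfolding pnorm_inf by (intro Max_eqI) (auto intro: range_eqI[where x=i])
qed

lemma oh_diff: assumes "one_hot a" "one_hot b" "a \<noteq> b" shows "pnorm \<infinity> (a - b) = 1"
proof -
  from assms(3) obtain i where i: "a $ i \<noteq> b $ i" by (auto simp: vec_eq_iff)
  have ab: "(a $ j = 0 \<or> a $ j = 1) \<and> (b $ j = 0 \<or> b $ j = 1)" for j
    using assms(1,2) unfolding one_hot_def by blast
  have "\<bar>a $ i - b $ i\<bar> = 1" using ab[of i] i by auto
  moreover have "\<bar>a $ j - b $ j\<bar> \<le> 1" for j using ab[of j] by auto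
  ultimately show ?thesis unfolding pnorm_inf by (intro Max_eqI) (auto intro: range_eqI[where x=i])
qed

lemma erp_oh: assumes "\<forall>a\<in>set A. one_hot a" "\<forall>b\<in>set B. one_hot b"
  shows "erp \<infinity> A B = L A B"
  unfolding erp_gd L_def using assms
  by (intro gd_cong) (auto simp del: pnorm_inf simp add: oh_norm oh_diff pnorm_zero)

lemma step_cons: "edit_step X Y \<Longrightarrow> edit_step (x # X) (x # Y)"
proof (induction rule: edit_step.induct)
  case (del xs y ys) then show ?case using edit_step.del[of "x # xs" y ys] by simp
next
  case (ins xs ys y) then show ?case using edit_step.ins[of "x # xs" ys y] by simp
next
  case (sub xs y ys z) then show ?case using edit_step.sub[of "x # xs" y ys z] by simp
qed

lemma path_cons: "(edit_step ^^ n) X Y \<Longrightarrow> (edit_step ^^ n) (x # X) (x # Y)"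
proof (induction n arbitrary: Y)
  case 0 then show ?case by simp
next
  case (Suc n)
  then obtain Z where Z: "(edit_step ^^ n) X Z" "edit_step Z Y" by auto
  show ?case by (rule relpowp_Suc_I[OF Suc.IH[OF Z(1)] step_cons[OF Z(2)]])
qed

lemma step_le: "edit_step X Y \<Longrightarrow> L X Y \<le> 1"
  unfolding L_def
proof (induction rule: edit_step.induct)
  case (del xs x ys)
  then show ?case
  proof (induction xs)
    case Nil then show ?case using lev.U1[of x ys ys] lev.self[of ys] by simp
  next
    case (Cons z xs) then show ?case using lev.U3[of z "xs @ x # ys" z "xs @ ys"] by simp
  qed
next
  case (ins xs ys x)
  then show ?case
  proof (induction xs)
    case Nil then show ?case using lev.U2[of ys x ys] lev.self[of ys] by simp
  next
    case (Cons z xs) then show ?case using lev.U3[of z "xs @ ys" z "xs @ x # ys"] by simp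
  qed
next
  case (sub xs x ys y)
  then show ?case
  proof (induction xs)
    case Nil
    have "(if x = y then 0 else 1::real) \<le> 1" by simp
    then show ?case using lev.U3[of x ys y ys] lev.self[of ys] by (simp only: append_Nil)
  next
    case (Cons z xs) then show ?case using lev.U3[of z "xs @ x # ys" z "xs @ y # ys"] by simp
  qed
qed

lemma path_le: "(edit_step ^^ n) X Y \<Longrightarrow> L X Y \<le> real n"
proof (induction n arbitrary: Y)
  case 0 then show ?case by (simp add: L_def lev.self)
next
  case (Suc n)
  then obtain Z where Z: "(edit_step ^^ n) X Z" "edit_step Z Y" by auto
  have "L X Y \<le> L X Z + L Z Y" unfolding L_def by (rule lev.tri)
  then show ?case using Suc.IH[OF Z(1)] step_le[OF Z(2)] by simp
qed

lemma path_del: "(edit_step ^^ length A) A []"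
proof (induction A)
  case Nil then show ?case by simp
next
  case (Cons a A)
  have "edit_step (a # A) A" using edit_step.del[of "[]" a A] by simp
  then show ?case using Cons by (simp del: relpowp.simps add: relpowp_Suc_I2)
qed

lemma path_ins: "(edit_step ^^ length B) [] B"
proof (induction B)
  case Nil then show ?case by simp
next
  case (Cons b B)
  have "edit_step B (b # B)" using edit_step.ins[of "[]" B b] by simp
  then show ?case using Cons by (simp del: relpowp.simps add: relpowp_Suc_I)
qed

lemma path_ex: "\<exists>n. (edit_step ^^ n) A B \<and> real n = L A B"
  unfolding L_def
proof (induction A B rule: l2_induct)
  case (1 A)
  then show ?case using path_del[of A] by (intro exI[of _ "length A"]) (simp add: sum_list_triv)
next
  case (2 b B)
  then show ?case using path_ins[of "b # B"] by (intro exI[of _ "length (b # B)"]) (simp add: sum_list_triv)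
next
  case (3 a A b B)
  let ?L = "gd (\<lambda>_. 1::real) (\<lambda>a b. if a = b then 0 else 1)"
  from 3 obtain n1 where n1: "(edit_step ^^ n1) A (b # B)" "real n1 = ?L A (b # B)" by blast
  from 3 obtain n2 where n2: "(edit_step ^^ n2) (a # A) B" "real n2 = ?L (a # A) B" by blast
  from 3 obtain n3 where n3: "(edit_step ^^ n3) A B" "real n3 = ?L A B" by blast
  have p1: "(edit_step ^^ Suc n1) (a # A) (b # B)"
    using edit_step.del[of "[]" a A] n1(1) by (simp del: relpowp.simps add: relpowp_Suc_I2)
  have p2: "(edit_step ^^ Suc n2) (a # A) (b # B)"
    using edit_step.ins[of "[]" B b] n2(1) by (simp del: relpowp.simps add: relpowp_Suc_I)
  have p3: "\<exists>k. (edit_step ^^ k) (a # A) (b # B) \<and> real k = (if a = b then 0 else 1) + ?L A B"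
  proof (cases "a = b")
    case True
    then show ?thesis using path_cons[OF n3(1), of a] n3(2) by auto
  next
    case False
    have "edit_step (a # A) (b # A)" using edit_step.sub[of "[]" a A b] by simp
    then have "(edit_step ^^ Suc n3) (a # A) (b # B)"
      using path_cons[OF n3(1), of b] by (simp del: relpowp.simps add: relpowp_Suc_I2)
    moreover have "real (Suc n3) = (if a = b then 0 else 1) + ?L A B"
      using False n3(2) of_nat_Suc[of n3] by simp
    ultimately show ?thesis by blast
  qed
  have eq: "?L (a # A) (b # B) = min (1 + ?L A (b # B)) (min (1 + ?L (a # A) B) ((if a = b then 0 else 1) + ?L A B))"
    by simp
  obtain k where k: "(edit_step ^^ k) (a # A) (b # B)" "real k = (if a = b then 0 else 1) + ?L A B"
    using p3 by blast
  have "?L (a # A) (b # B) = 1 + ?L A (b # B) \<or> ?L (a # A) (b # B) = 1 + ?L (a # A) B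
     \<or> ?L (a # A) (b # B) = (if a = b then 0 else 1) + ?L A B"
    unfolding eq by linarith
  then show ?case
  proof (elim disjE)
    assume h: "?L (a # A) (b # B) = 1 + ?L A (b # B)"
    have "real (Suc n1) = ?L (a # A) (b # B)" using n1(2) h of_nat_Suc[of n1] by linarith
    then show ?case using p1 by blast
  next
    assume h: "?L (a # A) (b # B) = 1 + ?L (a # A) B"
    have "real (Suc n2) = ?L (a # A) (b # B)" using n2(2) h of_nat_Suc[of n2] by linarith
    then show ?case using p2 by blast
  next
    assume h: "?L (a # A) (b # B) = (if a = b then 0 else 1) + ?L A B"
    have "real k = ?L (a # A) (b # B)" using k(2) h by linarith
    then show ?case using k(1) by blast
  qed
qed

lemma lev_eq: "real (levenshtein A B) = L A B"
proof -
  obtain n where n: "(edit_step ^^ n) A B" "real n = L A B" using path_ex by blast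
  have "levenshtein A B \<le> n" unfolding levenshtein_def using n(1) by (rule Least_le)
  moreover have "(edit_step ^^ levenshtein A B) A B" unfolding levenshtein_def using n(1) by (rule LeastI)
  then have "L A B \<le> real (levenshtein A B)" by (rule path_le)
  ultimately show ?thesis using n(2) by linarith
qed

theorem lemma1:
  fixes p :: ereal
  assumes "p \<ge> 1"
  shows "(\<forall>A B :: (real ^ 'd) list. (\<forall>a\<in>set A. one_hot a) \<longrightarrow> (\<forall>b\<in>set B. one_hot b) \<longrightarrow>
            erp \<infinity> A B = real (levenshtein A B))
   \<and> (\<forall>A B :: (real ^ 'd) list. erp p (A @ [0]) B = erp p A B \<and> erp p (0 # A) B = erp p A B)
   \<and> (\<forall>A :: (real ^ 'd) list. erp p A [] = (\<Sum>a\<leftarrow>A. pnorm p a))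
   \<and> (\<forall>A B :: (real ^ 'd) list. erp p A B = erp p B A)
   \<and> (\<forall>A B C :: (real ^ 'd) list. erp p A B \<le> erp p A C + erp p C B)
   \<and> (\<forall>A :: (real ^ 'd) list. erp p A (A @ [0]) = 0 \<and> erp p A A = 0)"
proof -
  interpret e: cost "pnorm p :: real ^ 'd \<Rightarrow> real" "\<lambda>a b. pnorm p (a - b)"
    by (rule pnorm_cost[OF assms])
  have z: "pnorm p (0 :: real ^ 'd) = 0" by (rule pnorm_zero)
  have sym: "erp p A B = erp p B A" for A B :: "(real ^ 'd) list"
    unfolding erp_gd by (rule e.sym)
  have tri: "erp p A B \<le> erp p A C + erp p C B" for A B C :: "(real ^ 'd) list"
    unfolding erp_gd by (rule e.tri)
  have s0: "erp p (A @ [0]) A = 0" for A :: "(real ^ 'd) list"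
    unfolding erp_gd by (rule e.snoc_zero[OF z])
  have c0: "erp p (0 # A) A = 0" for A :: "(real ^ 'd) list"
    unfolding erp_gd by (rule e.cons_zero[OF z])
  have self: "erp p A A = 0" for A :: "(real ^ 'd) list"
    unfolding erp_gd by (rule e.self)
  have b: "erp p (A @ [0]) B = erp p A B \<and> erp p (0 # A) B = erp p A B" for A B :: "(real ^ 'd) list"
    using tri[of "A @ [0]" B A] tri[of A B "A @ [0]"] tri[of "0 # A" B A] tri[of A B "0 # A"]
      s0[of A] c0[of A] sym[of A "A @ [0]"] sym[of A "0 # A"] by linarith
  show ?thesis
  proof (intro conjI allI impI)
    fix A B :: "(real ^ 'd) list"
    assume "\<forall>a\<in>set A. one_hot a" "\<forall>b\<in>set B. one_hot b"
    then show "erp \<infinity> A B = real (levenshtein A B)" using erp_oh lev_eq by metis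
  next
    fix A :: "(real ^ 'd) list"
    show "erp p A (A @ [0]) = 0" using s0[of A] sym[of A "A @ [0]"] by simp
    show "erp p A A = 0" by (rule self)
    show "erp p A [] = (\<Sum>a\<leftarrow>A. pnorm p a)" by simp
  next
    fix A B :: "(real ^ 'd) list"
    show "erp p (A @ [0]) B = erp p A B" using b by blast
    show "erp p (0 # A) B = erp p A B" using b by blast
    show "erp p A B = erp p B A" by (rule sym)
  next
    fix A B C :: "(real ^ 'd) list"
    show "erp p A B \<le> erp p A C + erp p C B" by (rule tri)
  qed
qed

end
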